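(* Let $L>0$, $K>0$, $L_p a>0$, $t_0>0$, $0<\nu_{\min}<\nu_{\max}$, and let $\sigma_1,\sigma_2,p_0,w_0,w_D,q_l$ be real constants. Put $\beta=\frac{L_paL^2}{K}$ and $\nu(x)=\nu_{\max}-(\nu_{\max}-\nu_{\min})x$ for $x\in[0,1]$. Let $p,u,w$ be twice continuously differentiable functions on $[0,1]$ satisfying $$\frac{1}{t_0}\frac{d}{dx}\Big(\nu \frac{dp}{dx}\Big) - \sigma_1\frac{d}{dx}\Big(\nu \frac{du}{dx}\Big) - \sigma_2\frac{d}{dx}\Big(\nu\frac{dw}{dx}\Big) + q_U - q_l = 0 \quad\text{on } [0,1],$$ where $$q_U(x) = \beta\Big(\frac{1}{t_0}(p_0-p(x)) + \sigma_1 u(x) + \sigma_2 (w(x)-w_0)\Big),$$ together with $p(0)=1$, $u(0)=1$, $w(0)=w_D$, $p'(1)=u'(1)=w'(1)=0$. Define $$j_U(x) = L\nu(x)\Big(-\frac{1}{t_0}p'(x) + \sigma_1 u'(x) + \sigma_2 w'(x)\Big).$$ Put $\nu_*=\frac{\nu_{\max}}{\nu_{\max}-\nu_{\min}}$, $\delta_*=\frac{L_paL^2}{K(\nu_{\max}-\nu_{\min})}$, $z(x)=2\sqrt{\delta_*(\nu_*-x)}$, $z_0=z(0)$, $z_1=z(1)$, $$q_0 = \beta\Big(\frac{1}{t_0}(p_0-1)+\sigma_1+\sigma_2 (w_D - w_0)\Big),\quad D = I_0(z_0)K_1(z_1)+K_0(z_0)I_1(z_1),$$ $$C_1=\frac{(q_0-q_l)K_1(z_1)}{D},\qquad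 C_2=\frac{(q_0-q_l)I_1(z_1)}{D},$$ where $I_0,I_1$ and $K_0,K_1$ are the modified Bessel functions of the first and second (Macdonald) kind of orders $0$ and $1$. Then for all $x\in[0,1]$ $$q_U(x)=C_1I_0(z(x))+C_2K_0(z(x))+q_l,\qquad j_U(x)=-L\sqrt{\frac{\nu_*-x}{\delta_*}}\,\Big(C_1I_1(z(x))-C_2K_1(z(x))\Big).$$
   Context: This is the steady-state fluid balance equation of a non-dimensionalised model of fluid, glucose and albumin transport in peritoneal dialysis, under the assumptions that the reflection coefficients in tissue and capillary wall coincide and that the fractional void volume $\nu$ decreases linearly in the non-dimensional depth $x\in[0,1]$ from $\nu_{\max}$ to $\nu_{\min}$. Here $p$ is non-dimensional hydrostatic pressure, $u,w$ non-dimensional glucose and albumin concentrations, $q_U$ the density of fluid flux from blood to tissue, $j_U$ the fluid flux across the tissue, $q_l$ the lymphatic flux density, $w_D$ and $w_0$ the non-dimensional albumin concentrations in dialysate and blood. Note $\nu_*>1$ and $\delta_*>0$, so $z(x)>0$ on $[0,1]$. *)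

theory Defs
  imports "HOL-Analysis.Analysis"
begin

definition besselI :: "nat \<Rightarrow> real \<Rightarrow> real" where
  "besselI n x = (\<Sum>k. (x / 2) ^ (2 * k + n) / (fact k * fact (k + n)))"

text \<open>Modified Bessel function of the second kind (Macdonald function) of integer order n,
  via the standard integral representation K_n(x) = int_0^infty exp(-x cosh t) cosh(n t) dt, x > 0.\<close>
definition besselK :: "nat \<Rightarrow> real \<Rightarrow> real" where
  "besselK n x = integral {0..} (\<lambda>t. exp (- x * cosh t) * cosh (real n * t))"

end

theory Submission
  imports Defs "HOL-Real_Asymp.Real_Asymp"
begin


lemma bterm_bound:
  fixes x R :: real
  assumes "\<bar>x\<bar> \<le> R" "R \<ge> 2"
  shows "\<bar>(x/2)^(2*k+m) / (fact k * fact (k+j))\<bar> \<le> R^m * (R^2)^k / fact k"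
proof -
  have f1: "fact (k+j) \<ge> (1::real)" by simp
  have "\<bar>(x/2)^(2*k+m) / (fact k * fact (k+j))\<bar> = \<bar>x/2\<bar>^(2*k+m) / (fact k * fact (k+j))"
    by (simp add: power_abs)
  also have "\<dots> \<le> \<bar>x/2\<bar>^(2*k+m) / fact k"
    using f1 by (intro divide_left_mono) (auto intro: mult_pos_pos)
  also have "\<dots> \<le> R^(2*k+m) / fact k"
  proof (intro divide_right_mono)
    have "\<bar>x/2\<bar>^(2*k+m) \<le> R^(2*k+m)"
      using assms by (intro power_mono) auto
    then show "\<bar>x/2\<bar>^(2*k+m) \<le> R^(2*k+m)" .
  qed simp
  also have "R^(2*k+m) = R^m * (R^2)^k"
    by (simp add: power_add power_mult)
  finally show ?thesis .
qed

lemma bterm'_bound: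
  fixes x R :: real
  assumes "\<bar>x\<bar> \<le> R" "R \<ge> 2"
  shows "\<bar>real (2*k+m)/2 * (x/2)^(2*k+m-1) / (fact k * fact (k+j))\<bar> \<le> R^m * (R^2)^k / fact k"
proof -
  define n where "n = 2*k+m"
  have f1: "fact (k+j) \<ge> (1::real)" by simp
  have "\<bar>real n/2 * (x/2)^(n-1) / (fact k * fact (k+j))\<bar> = real n/2 * \<bar>x/2\<bar>^(n-1) / (fact k * fact (k+j))"
    by (simp add: power_abs abs_mult)
  also have "\<dots> \<le> real n/2 * \<bar>x/2\<bar>^(n-1) / fact k"
    using f1 by (intro divide_left_mono) (auto intro: mult_pos_pos)
  also have "\<dots> \<le> real n/2 * (R/2)^(n-1) / fact k"
    using assms by (intro divide_right_mono mult_left_mono power_mono) auto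
  also have "\<dots> \<le> 2^n * (R/2)^n / fact k"
  proof (intro divide_right_mono mult_mono)
    have "n < 2^n" by (rule less_exp)
    then have "real n < 2^n" by (metis of_nat_less_iff of_nat_numeral of_nat_power)
    moreover have "(0::real) \<le> 2^n" by simp
    ultimately show "real n / 2 \<le> 2^n" by linarith
    show "(R/2)^(n-1) \<le> (R/2)^n" using assms by (intro power_increasing) auto
  qed (use assms in auto)
  also have "2^n * (R/2)^n = R^n" by (simp add: power_divide)
  also have "R^n = R^m * (R^2)^k" by (simp add: n_def power_add power_mult)
  finally show ?thesis by (simp add: n_def)
qed

lemma summable_bound: "summable (\<lambda>k. R^m * (R^2)^k / fact k :: real)"
proof -
  have "summable (\<lambda>k. R^m * (inverse (fact k) * (R^2)^k) :: real)"
    by (intro summable_mult summable_exp)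
  then show ?thesis by (simp add: field_simps)
qed

lemma bseries:
  fixes x :: real
  shows "summable (\<lambda>k. (x/2)^(2*k+m) / (fact k * fact (k+j)))"
    "((\<lambda>x. \<Sum>k. (x/2)^(2*k+m) / (fact k * fact (k+j))) has_real_derivative
       (\<Sum>k. real (2*k+m)/2 * (x/2)^(2*k+m-1) / (fact k * fact (k+j)))) (at x)"
proof -
  define R where "R = \<bar>x\<bar> + 2"
  let ?S = "{-R<..<R}"
  have d: "((\<lambda>x. (x/2)^(2*k+m) / (fact k * fact (k+j))) has_real_derivative
       real (2*k+m)/2 * (y/2)^(2*k+m-1) / (fact k * fact (k+j))) (at y within ?S)" for k y
  proof -
    have "((\<lambda>x. (x/2)^(2*k+m) / (fact k * fact (k+j))) has_real_derivative
       (real (2*k+m) * (y/2)^(2*k+m-1) * (1/2)) / (fact k * fact (k+j))) (at y within ?S)"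
    proof (intro DERIV_cdivide)
      have h2: "((\<lambda>x. x/2) has_real_derivative 1/2) (at y within ?S)"
        by (auto intro!: derivative_eq_intros)
      show "((\<lambda>x. (x/2)^(2*k+m)) has_real_derivative real (2*k+m) * (y/2)^(2*k+m-1) * (1/2)) (at y within ?S)"
        by (rule DERIV_power[OF h2, of "2*k+m", THEN DERIV_cong]) (simp add: mult_ac)
    qed
    then show ?thesis by (rule DERIV_cong) (simp add: field_simps)
  qed
  have u: "uniformly_convergent_on ?S (\<lambda>n y. \<Sum>i<n. real (2*i+m)/2 * (y/2)^(2*i+m-1) / (fact i * fact (i+j)))"
  proof (rule Weierstrass_m_test'[OF _ summable_bound[of R m]])
    fix n y assume "y \<in> ?S"
    then have "\<bar>y\<bar> \<le> R" by auto
    from bterm'_bound[OF this, of n m j]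
    show "norm (real (2*n+m)/2 * (y/2)^(2*n+m-1) / (fact n * fact (n+j))) \<le> R^m * (R^2)^n / fact n"
      by (simp add: R_def)
  qed
  have s0: "summable (\<lambda>k. (0/2)^(2*k+m) / (fact k * fact (k+j)::real))"
    by (rule summable_comparison_test'[OF summable_bound[of 2 m], of 0])
       (use bterm_bound[of 0 2] in \<open>auto simp: real_norm_def\<close>)
  have xi: "x \<in> interior ?S" by (auto simp: R_def)
  have z: "0 \<in> ?S" by (auto simp: R_def)
  show "summable (\<lambda>k. (x/2)^(2*k+m) / (fact k * fact (k+j)))"
    by (rule has_field_derivative_series'(1)[OF convex_real_interval(8) d u z s0 xi])
  show "((\<lambda>x. \<Sum>k. (x/2)^(2*k+m) / (fact k * fact (k+j))) has_real_derivative
       (\<Sum>k. real (2*k+m)/2 * (x/2)^(2*k+m-1) / (fact k * fact (k+j)))) (at x)"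
    by (rule has_field_derivative_series'(2)[OF convex_real_interval(8) d u z s0 xi])
qed

lemma besselI_eq: "besselI n = (\<lambda>x. \<Sum>k. (x/2)^(2*k+n) / (fact k * fact (k+n)))"
  by (rule ext) (simp add: besselI_def)

lemma besselI_summable: "summable (\<lambda>k. (x/2)^(2*k+n) / (fact k * fact (k+n)::real))"
  by (rule bseries(1))

lemma besselI_deriv0: "(besselI 0 has_real_derivative besselI 1 x) (at x)"
proof -
  define g where "g k = real (2*k+0)/2 * (x/2)^(2*k+0-1) / (fact k * fact (k+0))" for k
  have "(\<lambda>k. g (Suc k)) = (\<lambda>k. (x/2)^(2*k+1) / (fact k * fact (k+1)))"
  proof (rule ext)
    fix k
    have h1: "2*Suc k+0-1 = 2*k+1" by simp
    have h2: "real (2*Suc k + 0)/2 = real (Suc k)" by simp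
    have h3: "fact (Suc k) = real (Suc k) * (fact k::real)" by simp
    have h4: "Suc k + 0 = k + 1" by simp
    show "g (Suc k) = (x/2)^(2*k+1) / (fact k * fact (k+1))"
      unfolding g_def h1 h2 h4 by (simp only: h3[symmetric] Suc_eq_plus1[symmetric]) (simp add: fact_Suc)
  qed
  then have "(\<lambda>k. g (Suc k)) sums besselI 1 x"
    using besselI_summable[of x 1] by (simp add: besselI_def summable_sums)
  then have "g sums (besselI 1 x + g 0)" by (simp only: sums_Suc_iff)
  moreover have "g 0 = 0" by (simp add: g_def)
  ultimately have "g sums besselI 1 x" by simp
  then have e: "(\<Sum>k. g k) = besselI 1 x" by (rule sums_unique[symmetric])
  show ?thesis
    using bseries(2)[of 0 0 x] unfolding besselI_eq[of 0] e[unfolded g_def] .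
qed

lemma besselI_deriv1: "((\<lambda>x. x * besselI 1 x) has_real_derivative x * besselI 0 x) (at x)"
proof -
  have eq: "(\<lambda>x. x * besselI 1 x) = (\<lambda>x. 2 * (\<Sum>k. (x/2)^(2*k+2) / (fact k * fact (k+1))))"
  proof (rule ext)
    fix y :: real
    have "y * besselI 1 y = (\<Sum>k. y * ((y/2)^(2*k+1) / (fact k * fact (k+1))))"
      unfolding besselI_def by (rule suminf_mult[symmetric, OF besselI_summable])
    also have "\<dots> = (\<Sum>k. 2 * ((y/2)^(2*k+2) / (fact k * fact (k+1))))"
    proof (rule arg_cong[where f=suminf], rule ext)
      fix k
      have "y * (y/2)^(2*k+1) = 2 * ((y/2) * (y/2)^(2*k+1))" by simp
      also have "(y/2) * (y/2)^(2*k+1) = (y/2)^(2*k+2)" by simp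
      finally show "y * ((y/2)^(2*k+1) / (fact k * fact (k+1))) = 2 * ((y/2)^(2*k+2) / (fact k * fact (k+1)))"
        by simp
    qed
    also have "\<dots> = 2 * (\<Sum>k. (y/2)^(2*k+2) / (fact k * fact (k+1)))"
      by (rule suminf_mult[OF bseries(1)])
    finally show "y * besselI 1 y = 2 * (\<Sum>k. (y/2)^(2*k+2) / (fact k * fact (k+1)))" .
  qed
  have "2 * (\<Sum>k. real (2*k+2)/2 * (x/2)^(2*k+2-1) / (fact k * fact (k+1)))
        = (\<Sum>k. 2 * (real (2*k+2)/2 * (x/2)^(2*k+2-1) / (fact k * fact (k+1))))"
  proof (rule suminf_mult[symmetric], rule summable_comparison_test'[OF summable_bound[of "\<bar>x\<bar>+2" 2], of 0])
    fix n :: nat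
    show "norm (real (2*n+2)/2 * (x/2)^(2*n+2-1) / (fact n * fact (n+1))) \<le> (\<bar>x\<bar>+2)^2 * ((\<bar>x\<bar>+2)^2)^n / fact n"
      using bterm'_bound[of x "\<bar>x\<bar>+2" n 2 1] by simp
  qed
  also have "\<dots> = (\<Sum>k. x * ((x/2)^(2*k+0) / (fact k * fact (k+0))))"
  proof (rule arg_cong[where f=suminf], rule ext)
    fix k
    have h1: "2*k+2-1 = Suc (2*k+0)" by simp
    have h2: "real (2*k+2)/2 = real (Suc k)" by simp
    have h3: "fact (k+1) = real (Suc k) * (fact k::real)" by simp
    have h4: "(x/2)^Suc (2*k+0) = (x/2) * (x/2)^(2*k+0)" by simp
    show "2 * (real (2*k+2)/2 * (x/2)^(2*k+2-1) / (fact k * fact (k+1))) = x * ((x/2)^(2*k+0) / (fact k * fact (k+0)))"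
      unfolding h1 h2 h3 h4 by simp
  qed
  also have "\<dots> = x * besselI 0 x"
    unfolding besselI_def by (rule suminf_mult[OF besselI_summable])
  finally have e: "2 * (\<Sum>k. real (2*k+2)/2 * (x/2)^(2*k+2-1) / (fact k * fact (k+1))) = x * besselI 0 x" .
  show ?thesis unfolding eq e[symmetric]
    by (intro DERIV_cmult bseries(2))
qed

lemma besselI_pos: "x > 0 \<Longrightarrow> besselI n x > 0"
  unfolding besselI_def by (rule suminf_pos[OF besselI_summable]) auto



lemma trunc_int:
  fixes g h :: "real \<Rightarrow> real"
  assumes g: "continuous_on {0..} g"
  shows "integral {0..} (\<lambda>t. if t \<in> {0..real N} then g t else 0) = integral {0..real N} g"
    and "(\<lambda>t. if t \<in> {0..real N} then g t else 0) integrable_on {0..}"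
proof -
  have gi: "g integrable_on {0..real N}"
    by (rule integrable_continuous_interval, rule continuous_on_subset[OF g]) auto
  show "integral {0..} (\<lambda>t. if t \<in> {0..real N} then g t else 0) = integral {0..real N} g"
    by (subst integral_restrict_Int) (simp add: Int_absorb2)
  show "(\<lambda>t. if t \<in> {0..real N} then g t else 0) integrable_on {0..}"
    using gi has_integral_restrict[of "{0..real N}" "{0..}" g] unfolding integrable_on_def
    by auto
qed

lemma trunc_conv:
  fixes g h :: "real \<Rightarrow> real"
  assumes g: "continuous_on {0..} g" and h: "h integrable_on {0..}"
    and b: "\<And>t. t \<ge> 0 \<Longrightarrow> \<bar>g t\<bar> \<le> h t"
  shows "g integrable_on {0..}" "(\<lambda>N. integral {0..real N} g) \<longlonglongrightarrow> integral {0..} g"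
proof -
  let ?f = "\<lambda>N t. if t \<in> {0..real N} then g t else 0"
  have conv: "(\<lambda>k. ?f k t) \<longlonglongrightarrow> g t" if "t \<in> {0..}" for t
  proof -
    have "eventually (\<lambda>k. ?f k t = g t) sequentially"
    proof (rule eventually_mono[OF eventually_ge_at_top[of "nat \<lceil>t\<rceil>"]])
      fix k assume "nat \<lceil>t\<rceil> \<le> k"
      then have "real (nat \<lceil>t\<rceil>) \<le> real k" by simp
      then have "t \<le> real k" using real_nat_ceiling_ge[of t] by linarith
      then show "?f k t = g t" using that by auto
    qed
    then show ?thesis by (rule tendsto_eventually)
  qed
  have le: "norm (?f k t) \<le> h t" if "t \<in> {0..}" for k t
    using b[of t] that by auto
  note dc = dominated_convergence[of ?f "{0..}" h g, OF trunc_int(2)[OF g] h le conv]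
  show "g integrable_on {0..}" by (rule dc(1))
  show "(\<lambda>N. integral {0..real N} g) \<longlonglongrightarrow> integral {0..} g"
    using dc(2) unfolding trunc_int(1)[OF g] .
qed

lemma trunc_tail:
  fixes g h :: "real \<Rightarrow> real"
  assumes g: "continuous_on {0..} g" and h: "h integrable_on {0..}" and hc: "continuous_on {0..} h"
    and b: "\<And>t. t \<ge> 0 \<Longrightarrow> \<bar>g t\<bar> \<le> h t"
  shows "\<bar>integral {0..} g - integral {0..real N} g\<bar> \<le> integral {0..} h - integral {0..real N} h"
proof -
  let ?f = "\<lambda>g t. if t \<in> {0..real N} then g t else 0"
  have gi: "g integrable_on {0..}" by (rule trunc_conv(1)[OF g h b])
  have "integral {0..} g - integral {0..real N} g = integral {0..} (\<lambda>t. g t - ?f g t)"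
    by (simp only: integral_diff[OF gi trunc_int(2)[OF g]] trunc_int(1)[OF g])
  also have "\<bar>\<dots>\<bar> \<le> integral {0..} (\<lambda>t. h t - ?f h t)"
  proof -
    have "norm (integral {0..} (\<lambda>t. g t - ?f g t)) \<le> integral {0..} (\<lambda>t. h t - ?f h t)"
    proof (rule integral_norm_bound_integral[OF integrable_diff[OF gi trunc_int(2)[OF g]] integrable_diff[OF h trunc_int(2)[OF hc]]])
      fix t :: real assume "t \<in> {0..}"
      then show "norm (g t - ?f g t) \<le> h t - ?f h t"
        using b[of t] by (cases "t \<le> real N") auto
    qed
    then show ?thesis by simp
  qed
  also have "\<dots> = integral {0..} h - integral {0..real N} h"
    by (simp only: integral_diff[OF h trunc_int(2)[OF hc]] trunc_int(1)[OF hc])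
  finally show ?thesis .
qed

lemma param_deriv:
  fixes f fz :: "real \<Rightarrow> real \<Rightarrow> real" and h :: "real \<Rightarrow> real"
  assumes S: "open S" "convex S" "z \<in> S"
    and der: "\<And>y t. y \<in> S \<Longrightarrow> t \<ge> 0 \<Longrightarrow> ((\<lambda>y. f y t) has_real_derivative fz y t) (at y)"
    and contf: "\<And>y. y \<in> S \<Longrightarrow> continuous_on {0..} (f y)"
    and contfz: "continuous_on (S \<times> {0..}) (\<lambda>(y,t). fz y t)"
    and hint: "h integrable_on {0..}" and hc: "continuous_on {0..} h"
    and bf: "\<And>y t. y \<in> S \<Longrightarrow> t \<ge> 0 \<Longrightarrow> \<bar>f y t\<bar> \<le> h t"
    and bfz: "\<And>y t. y \<in> S \<Longrightarrow> t \<ge> 0 \<Longrightarrow> \<bar>fz y t\<bar> \<le> h t"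
  shows "((\<lambda>y. integral {0..} (f y)) has_real_derivative integral {0..} (fz z)) (at z)"
proof -
  have hnn: "h t \<ge> 0" if "t \<ge> 0" for t using bf[OF S(3) that] by linarith
  have contfz1: "continuous_on {0..} (fz y)" if "y \<in> S" for y
    by (rule continuous_on_compose2[OF contfz, where f="\<lambda>t. (y,t)", simplified])
       (use that in \<open>auto intro!: continuous_intros\<close>)
  define FN where "FN n y = integral {0..real n} (f y)" for n y
  define DN where "DN n y = integral {0..real n} (fz y)" for n y
  have dFN: "((FN n) has_derivative (*) (DN n x)) (at x within S)" if "x \<in> S" for n x
  proof -
    have "((\<lambda>y. integral (cbox 0 (real n)) (f y)) has_field_derivative integral (cbox 0 (real n)) (fz x)) (at x within S)"
    proof (rule leibniz_rule_field_derivative)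
      show "((\<lambda>y. f y t) has_field_derivative fz y t) (at y within S)" if "y \<in> S" "t \<in> cbox 0 (real n)" for y t
        using der[of y t] that by (auto intro: has_field_derivative_at_within)
      show "f y integrable_on cbox 0 (real n)" if "y \<in> S" for y
        unfolding cbox_interval by (rule integrable_continuous_interval, rule continuous_on_subset[OF contf[OF that]]) auto
      show "continuous_on (S \<times> cbox 0 (real n)) (\<lambda>(x, t). fz x t)"
        by (rule continuous_on_subset[OF contfz]) auto
    qed (use that S in auto)
    then show ?thesis unfolding has_field_derivative_def FN_def DN_def by simp
  qed
  define T where "T n = integral {0..} h - integral {0..real n} h" for n
  have T0: "T \<longlonglongrightarrow> 0"
  proof -
    have "(\<lambda>n. integral {0..real n} h) \<longlonglongrightarrow> integral {0..} h"
      by (rule trunc_conv(2)[OF hc hint]) (use hnn in auto)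
    then have "(\<lambda>n. integral {0..} h - integral {0..real n} h) \<longlonglongrightarrow> integral {0..} h - integral {0..} h"
      by (intro tendsto_intros)
    then show ?thesis unfolding T_def[abs_def] by simp
  qed
  have Tb: "\<bar>integral {0..} (fz y) - DN n y\<bar> \<le> T n" if "y \<in> S" for n y
    unfolding DN_def T_def by (rule trunc_tail[OF contfz1[OF that] hint hc bfz[OF that]])
  have nle: "\<forall>\<^sub>F n in sequentially. \<forall>x\<in>S. \<forall>k. norm (DN n x * k - integral {0..} (fz x) * k) \<le> e * norm k"
    if "e > 0" for e
  proof -
    have "\<forall>\<^sub>F n in sequentially. T n < e" using order_tendstoD(2)[OF T0 that] .
    then show ?thesis
    proof eventually_elim
      case (elim n)
      show ?case
      proof (intro ballI allI)
        fix x k assume "x \<in> S"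
        have "norm (DN n x * k - integral {0..} (fz x) * k) = \<bar>integral {0..} (fz x) - DN n x\<bar> * \<bar>k\<bar>"
          by (simp add: abs_mult left_diff_distrib[symmetric] abs_minus_commute)
        also have "\<dots> \<le> e * \<bar>k\<bar>"
          using Tb[OF \<open>x \<in> S\<close>, of n] elim by (intro mult_right_mono) auto
        finally show "norm (DN n x * k - integral {0..} (fz x) * k) \<le> e * norm k" by simp
      qed
    qed
  qed
  have lim: "(\<lambda>n. FN n y) \<longlonglongrightarrow> integral {0..} (f y)" if "y \<in> S" for y
    unfolding FN_def by (rule trunc_conv(2)[OF contf[OF that] hint bf[OF that]])
  obtain g where g: "\<forall>x\<in>S. (\<lambda>n. FN n x) \<longlonglongrightarrow> g x \<and> (g has_derivative (*) (integral {0..} (fz x))) (at x within S)"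
    using has_derivative_sequence[OF S(2) dFN nle S(3) lim[OF S(3)]] by blast
  have geq: "g x = integral {0..} (f x)" if "x \<in> S" for x
  proof -
    from g that have "(\<lambda>n. FN n x) \<longlonglongrightarrow> g x" by blast
    then show ?thesis by (rule LIMSEQ_unique[OF _ lim[OF that]])
  qed
  have "(g has_real_derivative integral {0..} (fz z)) (at z)"
  proof -
    from g S(3) have "(g has_derivative (*) (integral {0..} (fz z))) (at z within S)" by blast
    then show ?thesis unfolding has_field_derivative_def at_within_open[OF S(3) S(1)] .
  qed
  then show ?thesis
    by (rule has_field_derivative_transform_within_open[OF _ S(1) S(3)]) (use geq in auto)
qed



lemma besselK0_eq: "besselK 0 z = integral {0..} (\<lambda>t. exp (-z * cosh t))"
  by (simp add: besselK_def)

lemma besselK1_eq: "besselK 1 z = integral {0..} (\<lambda>t. exp (-z * cosh t) * cosh t)"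
  by (simp add: besselK_def)

lemma ek_bound:
  fixes a y t :: real
  assumes a: "a > 0" "a < y" and t: "t \<ge> 0"
  shows "exp (-y * cosh t) * cosh t * cosh t \<le> 54 / a^3 * exp (-t)"
proof -
  define c where "c = cosh t"
  have c1: "c \<ge> 1" by (simp add: c_def cosh_real_ge_1)
  have ce: "exp t / 2 \<le> c" by (simp add: c_def cosh_field_def)
  have "a*c/3 \<le> exp (a*c/3)" using exp_ge_add_one_self[of "a*c/3"] by linarith
  then have "(a*c/3)^3 \<le> exp (a*c/3)^3" using a c1 by (intro power_mono) auto
  also have "exp (a*c/3)^3 = exp (a*c)" by (subst exp_of_nat_mult[symmetric]) simp
  also have "\<dots> \<le> exp (y*c)" using a c1 by simp
  finally have e3: "(a*c)^3 / 27 \<le> exp (y*c)" by (simp add: power_divide)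
  have pos: "0 < (a*c)^3" using a c1 by simp
  have "exp (-y * c) * c * c = c * c / exp (y*c)" by (simp add: exp_minus field_simps)
  also have "\<dots> \<le> c * c / ((a*c)^3/27)"
    using e3 pos c1 by (intro divide_left_mono) auto
  also have "\<dots> = 27 / (a^3 * c)" using c1 a by (simp add: field_simps power3_eq_cube)
  also have "\<dots> \<le> 27 / (a^3 * (exp t / 2))"
    using ce a by (intro frac_le mult_left_mono) auto
  also have "\<dots> = 54 / a^3 * exp (-t)" by (simp add: exp_minus field_simps)
  finally show ?thesis by (simp add: c_def)
qed

lemma ek_bounds:
  fixes a y t :: real
  assumes a: "a > 0" "a < y" and t: "t \<ge> 0"
  shows "\<bar>exp (-y * cosh t)\<bar> \<le> 54 / a^3 * exp (-t)"
    "\<bar>exp (-y * cosh t) * cosh t\<bar> \<le> 54 / a^3 * exp (-t)"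
    "\<bar>exp (-y * cosh t) * cosh t * cosh t\<bar> \<le> 54 / a^3 * exp (-t)"
proof -
  have c1: "cosh t \<ge> 1" by (simp add: cosh_real_ge_1)
  have e: "exp (-y * cosh t) > 0" by simp
  have "exp (-y * cosh t) \<le> exp (-y * cosh t) * cosh t" using c1 e by simp
  moreover have "exp (-y * cosh t) * cosh t \<le> exp (-y * cosh t) * cosh t * cosh t" using c1 e by simp
  note this
  then show "\<bar>exp (-y * cosh t)\<bar> \<le> 54 / a^3 * exp (-t)"
    "\<bar>exp (-y * cosh t) * cosh t\<bar> \<le> 54 / a^3 * exp (-t)"
    "\<bar>exp (-y * cosh t) * cosh t * cosh t\<bar> \<le> 54 / a^3 * exp (-t)"
  proof -
    have b: "exp (-y * cosh t) * cosh t * cosh t \<le> 54 / a^3 * exp (-t)" by (rule ek_bound[OF a t])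
    have p: "0 \<le> exp (-y * cosh t) * cosh t" using c1 e by simp
    have p2: "0 \<le> exp (-y * cosh t) * cosh t * cosh t" using c1 e by simp
    show "\<bar>exp (-y * cosh t)\<bar> \<le> 54 / a^3 * exp (-t)"
      "\<bar>exp (-y * cosh t) * cosh t\<bar> \<le> 54 / a^3 * exp (-t)"
      "\<bar>exp (-y * cosh t) * cosh t * cosh t\<bar> \<le> 54 / a^3 * exp (-t)"
      using b p p2 e \<open>exp (-y * cosh t) \<le> exp (-y * cosh t) * cosh t\<close>
        \<open>exp (-y * cosh t) * cosh t \<le> exp (-y * cosh t) * cosh t * cosh t\<close> by linarith+
  qed
qed

lemma hint: "(\<lambda>t. (C::real) * exp (-t)) integrable_on {0..}"
  using integrable_on_cmult_left[OF integrable_on_exp_minus_to_infinity[of 1 0], of C] by simp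

lemma hcont: "continuous_on {0..} (\<lambda>t::real. (C::real) * exp (-t))"
  by (intro continuous_intros)

lemma besselK0_deriv:
  assumes z: "z > 0"
  shows "(besselK 0 has_real_derivative - besselK 1 z) (at z)"
proof -
  define a where "a = z/2"
  have a: "a > 0" "a < z" using z by (auto simp: a_def)
  have "((\<lambda>y. integral {0..} (\<lambda>t. exp (-y * cosh t))) has_real_derivative
      integral {0..} (\<lambda>t. - (exp (-z * cosh t) * cosh t))) (at z)"
  proof (rule param_deriv[where S="{a<..}" and h="\<lambda>t. 54 / a^3 * exp (-t)"])
    show "((\<lambda>y. exp (-y * cosh t)) has_real_derivative - (exp (-y * cosh t) * cosh t)) (at y)" for y t :: real
      by (auto intro!: derivative_eq_intros)
    show "continuous_on {0..} (\<lambda>t. exp (-y * cosh t))" for y :: real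
      by (intro continuous_intros)
    show "continuous_on ({a<..} \<times> {0..}) (\<lambda>(y, t). - (exp (-y * cosh t) * cosh t))"
      by (auto intro!: continuous_intros simp: case_prod_beta)
    show "\<bar>exp (-y * cosh t)\<bar> \<le> 54 / a^3 * exp (-t)" if "y \<in> {a<..}" "t \<ge> 0" for y t :: real
      using ek_bounds(1)[OF a(1) _ that(2), of y] that by auto
    show "\<bar>- (exp (-y * cosh t) * cosh t)\<bar> \<le> 54 / a^3 * exp (-t)" if "y \<in> {a<..}" "t \<ge> 0" for y t :: real
      using ek_bounds(2)[OF a(1) _ that(2), of y] that by auto
    show "(\<lambda>t. 54/a^3*exp(-t)) integrable_on {0..}" by (rule hint)
    show "continuous_on {0..} (\<lambda>t. 54/a^3*exp(-t))" by (rule hcont)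
  qed (use a in auto)
  then show ?thesis
    unfolding besselK1_eq integral_neg by (simp add: besselK0_eq[abs_def])
qed

definition K2c :: "real \<Rightarrow> real" where
  "K2c z = integral {0..} (\<lambda>t. exp (-z * cosh t) * cosh t * cosh t)"

lemma besselK1_deriv:
  assumes z: "z > 0"
  shows "(besselK 1 has_real_derivative - K2c z) (at z)"
proof -
  define a where "a = z/2"
  have a: "a > 0" "a < z" using z by (auto simp: a_def)
  have d: "((\<lambda>y. integral {0..} (\<lambda>t. exp (-y * cosh t) * cosh t)) has_real_derivative
      integral {0..} (\<lambda>t. - (exp (-z * cosh t) * cosh t * cosh t))) (at z)"
  proof (rule param_deriv[where S="{a<..}" and h="\<lambda>t. 54 / a^3 * exp (-t)"])
    show "((\<lambda>y. exp (-y * cosh t) * cosh t) has_real_derivative - (exp (-y * cosh t) * cosh t * cosh t)) (at y)" for y t :: real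
      by (auto intro!: derivative_eq_intros)
    show "continuous_on {0..} (\<lambda>t. exp (-y * cosh t) * cosh t)" for y :: real
      by (intro continuous_intros)
    show "continuous_on ({a<..} \<times> {0..}) (\<lambda>(y, t). - (exp (-y * cosh t) * cosh t * cosh t))"
      by (auto intro!: continuous_intros simp: case_prod_beta)
    show "\<bar>exp (-y * cosh t) * cosh t\<bar> \<le> 54 / a^3 * exp (-t)" if "y \<in> {a<..}" "t \<ge> 0" for y t :: real
      using ek_bounds(2)[OF a(1) _ that(2), of y] that by auto
    show "\<bar>- (exp (-y * cosh t) * cosh t * cosh t)\<bar> \<le> 54 / a^3 * exp (-t)" if "y \<in> {a<..}" "t \<ge> 0" for y t :: real
      using ek_bounds(3)[OF a(1) _ that(2), of y] that by auto
    show "(\<lambda>t. 54/a^3*exp(-t)) integrable_on {0..}" by (rule hint)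
    show "continuous_on {0..} (\<lambda>t. 54/a^3*exp(-t))" by (rule hcont)
  qed (use a in auto)
  show ?thesis
  proof -
    have e: "besselK 1 = (\<lambda>y. integral {0..} (\<lambda>t. exp (-y * cosh t) * cosh t))"
      by (rule ext) (rule besselK1_eq)
    show ?thesis using d unfolding e K2c_def integral_neg .
  qed
qed

lemma alg_ibp:
  fixes c s E z :: real
  assumes h: "c * c = 1 + s * s"
  shows "- (c * E + s * (E * (- z * s))) = z * (E * c * c - E) - E * c"
proof -
  have "z * (E * c * c - E) - E * c = z * (E * (c * c) - E) - E * c" by (simp add: mult.assoc)
  also have "\<dots> = z * (E * (1 + s * s) - E) - E * c" by (simp only: h)
  also have "\<dots> = - (c * E + s * (E * (- z * s)))" by (simp add: algebra_simps)
  finally show ?thesis by (rule sym)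
qed

lemma sinh_le_cosh: "\<bar>sinh (t::real)\<bar> \<le> cosh t"
proof -
  have "sinh t ^ 2 \<le> cosh t ^ 2" using cosh_square_eq[of t] by simp
  then have "\<bar>sinh t\<bar> \<le> \<bar>cosh t\<bar>" by (simp only: abs_le_square_iff)
  then show ?thesis by simp
qed

lemma K_ibp:
  assumes z: "z > 0"
  shows "z * (K2c z - besselK 0 z) = besselK 1 z"
proof -
  define a where "a = z/2"
  have a: "a > 0" "a < z" using z by (auto simp: a_def)
  define C where "C = 54 / a^3"
  have C: "C > 0" using a by (simp add: C_def)
  define e0 where "e0 t = exp (-z * cosh t)" for t
  define e1 where "e1 t = exp (-z * cosh t) * cosh t" for t
  define e2 where "e2 t = exp (-z * cosh t) * cosh t * cosh t" for t
  have c0: "continuous_on {0..} e0" unfolding e0_def by (intro continuous_intros)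
  have c1: "continuous_on {0..} e1" unfolding e1_def by (intro continuous_intros)
  have c2: "continuous_on {0..} e2" unfolding e2_def by (intro continuous_intros)
  have b0: "\<bar>e0 t\<bar> \<le> C * exp (-t)" if "t \<ge> 0" for t
    unfolding e0_def C_def by (rule ek_bounds(1)[OF a that])
  have b1: "\<bar>e1 t\<bar> \<le> C * exp (-t)" if "t \<ge> 0" for t
    unfolding e1_def C_def by (rule ek_bounds(2)[OF a that])
  have b2: "\<bar>e2 t\<bar> \<le> C * exp (-t)" if "t \<ge> 0" for t
    unfolding e2_def C_def by (rule ek_bounds(3)[OF a that])
  have i0: "e0 integrable_on {0..}" by (rule trunc_conv(1)[OF c0 hint b0])
  have i1: "e1 integrable_on {0..}" by (rule trunc_conv(1)[OF c1 hint b1])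
  have i2: "e2 integrable_on {0..}" by (rule trunc_conv(1)[OF c2 hint b2])
  define g where "g t = z * (e2 t - e0 t) - e1 t" for t
  have cg: "continuous_on {0..} g" unfolding g_def by (intro continuous_intros c0 c1 c2)
  have bg: "\<bar>g t\<bar> \<le> ((2*z+1)*C) * exp (-t)" if "t \<ge> 0" for t
  proof -
    have "\<bar>g t\<bar> \<le> \<bar>z * (e2 t - e0 t)\<bar> + \<bar>e1 t\<bar>" unfolding g_def by (rule abs_triangle_ineq4)
    also have "\<bar>z * (e2 t - e0 t)\<bar> = z * \<bar>e2 t - e0 t\<bar>" using z by (simp add: abs_mult)
    also have "\<dots> \<le> z * (\<bar>e2 t\<bar> + \<bar>e0 t\<bar>)" using z by (intro mult_left_mono abs_triangle_ineq4) auto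
    finally have "\<bar>g t\<bar> \<le> z * \<bar>e2 t\<bar> + z * \<bar>e0 t\<bar> + \<bar>e1 t\<bar>" by (simp add: algebra_simps)
    also have "\<dots> \<le> z * (C * exp (-t)) + z * (C * exp (-t)) + C * exp (-t)"
      using b0[OF that] b1[OF that] b2[OF that] z by (intro add_mono mult_left_mono) auto
    finally show ?thesis by (simp add: algebra_simps)
  qed
  have lim1: "(\<lambda>N. integral {0..real N} g) \<longlonglongrightarrow> integral {0..} g"
    by (rule trunc_conv(2)[OF cg hint bg])
  define F where "F t = - (sinh t * exp (-z * cosh t))" for t
  have ftc: "integral {0..real N} g = F (real N) - F 0" for N
  proof -
    have "(g has_integral (F (real N) - F 0)) {0..real N}"
    proof (rule fundamental_theorem_of_calculus)
      fix x assume "x \<in> {0..real N}"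
      have "(F has_real_derivative (- (cosh x * exp (-z * cosh x) + sinh x * (exp (-z * cosh x) * (- z * sinh x))))) (at x within {0..real N})"
        unfolding F_def by (auto intro!: derivative_eq_intros)
      moreover have "- (cosh x * exp (-z * cosh x) + sinh x * (exp (-z * cosh x) * (- z * sinh x))) = g x"
        unfolding g_def e0_def e1_def e2_def
        by (rule alg_ibp) (use cosh_square_eq[of x] in \<open>simp add: power2_eq_square\<close>)
      ultimately show "(F has_vector_derivative g x) (at x within {0..real N})"
        by (simp add: has_real_derivative_iff_has_vector_derivative)
    qed simp
    then show ?thesis by (rule integral_unique)
  qed
  have F0: "F 0 = 0" by (simp add: F_def)
  have limF: "(\<lambda>N. F (real N)) \<longlonglongrightarrow> 0"
  proof (rule Lim_null_comparison)
    show "\<forall>\<^sub>F N in sequentially. norm (F (real N)) \<le> C * exp (- real N)"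
    proof (rule always_eventually, rule allI)
      fix N :: nat
      have "norm (F (real N)) = \<bar>sinh (real N)\<bar> * exp (-z * cosh (real N))"
        by (simp add: F_def abs_mult)
      also have "\<dots> \<le> cosh (real N) * exp (-z * cosh (real N))"
        by (intro mult_right_mono sinh_le_cosh) auto
      also have "\<dots> = \<bar>e1 (real N)\<bar>" by (simp add: e1_def mult.commute)
      also have "\<dots> \<le> C * exp (- real N)" by (rule b1) simp
      finally show "norm (F (real N)) \<le> C * exp (- real N)" .
    qed
    show "(\<lambda>N. C * exp (- real N)) \<longlonglongrightarrow> 0" by real_asymp
  qed
  have "(\<lambda>N. integral {0..real N} g) \<longlonglongrightarrow> 0"
    unfolding ftc F0 using limF by simp
  then have g0: "integral {0..} g = 0" using lim1 LIMSEQ_unique by blast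
  have "integral {0..} g = z * (integral {0..} e2 - integral {0..} e0) - integral {0..} e1"
  proof -
    have "integral {0..} g = integral {0..} (\<lambda>t. z * (e2 t - e0 t)) - integral {0..} e1"
    proof -
      have "(\<lambda>t. z * (e2 t - e0 t)) integrable_on {0..}"
        using integrable_on_cmult_left[OF integrable_diff[OF i2 i0], of z] by simp
      then show ?thesis unfolding g_def by (rule integral_diff[OF _ i1])
    qed
    also have "integral {0..} (\<lambda>t. z * (e2 t - e0 t)) = z * integral {0..} (\<lambda>t. e2 t - e0 t)"
      by (rule integral_mult[symmetric, OF integrable_diff[OF i2 i0]])
    also have "integral {0..} (\<lambda>t. e2 t - e0 t) = integral {0..} e2 - integral {0..} e0"
      by (rule integral_diff[OF i2 i0])
    finally show ?thesis .
  qed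
  moreover have "integral {0..} e2 = K2c z" unfolding K2c_def e2_def[abs_def] by (rule refl)
  moreover have "integral {0..} e0 = besselK 0 z" unfolding besselK0_eq e0_def[abs_def] by (rule refl)
  moreover have "integral {0..} e1 = besselK 1 z" unfolding besselK1_eq e1_def[abs_def] by (rule refl)
  ultimately show ?thesis using g0 by simp
qed

lemma besselK1_deriv':
  assumes z: "z > 0"
  shows "((\<lambda>y. y * besselK 1 y) has_real_derivative - (z * besselK 0 z)) (at z)"
proof -
  have "((\<lambda>y. y * besselK 1 y) has_real_derivative (1 * besselK 1 z + (- K2c z) * z)) (at z)"
    by (rule DERIV_mult[OF DERIV_ident besselK1_deriv[OF z]])
  moreover have "1 * besselK 1 z + (- K2c z) * z = - (z * besselK 0 z)"
    using K_ibp[OF z] by (simp add: algebra_simps)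
  ultimately show ?thesis by simp
qed

lemma K_pos_aux:
  fixes g :: "real \<Rightarrow> real"
  assumes z: "z > 0" and gi: "g integrable_on {0..}"
    and lb: "\<And>t. t \<ge> 0 \<Longrightarrow> exp (-z * cosh t) \<le> g t"
  shows "integral {0..} g > 0"
proof -
  define c where "c = exp (-z * cosh 1)"
  have c: "c > 0" by (simp add: c_def)
  let ?r = "\<lambda>t::real. if t \<in> {0..1} then c else 0"
  have sub: "{0..1::real} \<subseteq> {0..}" by auto
  from integrable_const_ivl[of c 0 1] obtain i where "((\<lambda>_. c) has_integral i) {0..1::real}"
    by (auto simp: integrable_on_def)
  then have "(?r has_integral i) {0..}" using has_integral_restrict[OF sub, of "\<lambda>_. c" i] by simp
  then have ri: "?r integrable_on {0..}" by (auto simp: integrable_on_def)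
  have "integral {0..} ?r = c"
    by (subst integral_restrict_Int) (simp add: Int_absorb2)
  moreover have "integral {0..} ?r \<le> integral {0..} g"
  proof (rule integral_le[OF ri gi])
    fix t :: real assume t: "t \<in> {0..}"
    show "?r t \<le> g t"
    proof (cases "t \<le> 1")
      case True
      then have "cosh t \<le> cosh 1" using t by (subst cosh_real_nonneg_le_iff) auto
      then have "c \<le> exp (-z * cosh t)" unfolding c_def using z by simp
      then show ?thesis using lb[of t] t True by auto
    next
      case False
      have "t \<ge> 0" using t by simp
      then have "exp (-z * cosh t) \<le> g t" by (rule lb)
      then have "0 \<le> g t" using exp_gt_zero[of "-z * cosh t"] by linarith
      then show ?thesis using False by simp
    qed
  qed
  ultimately show ?thesis using c by simp
qed

lemma besselK_pos:
  assumes z: "z > 0"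
  shows "besselK 0 z > 0" "besselK 1 z > 0"
proof -
  define a where "a = z/2"
  have a: "a > 0" "a < z" using z by (auto simp: a_def)
  have i0: "(\<lambda>t. exp (-z * cosh t)) integrable_on {0..}"
    by (rule trunc_conv(1)[OF _ hint ek_bounds(1)[OF a]]) (intro continuous_intros)
  have i1: "(\<lambda>t. exp (-z * cosh t) * cosh t) integrable_on {0..}"
    by (rule trunc_conv(1)[OF _ hint ek_bounds(2)[OF a]]) (intro continuous_intros)
  show "besselK 0 z > 0" unfolding besselK0_eq by (rule K_pos_aux[OF z i0]) simp
  show "besselK 1 z > 0" unfolding besselK1_eq
    by (rule K_pos_aux[OF z i1]) (simp add: cosh_real_ge_1)
qed



lemma endpoints_zero:
  fixes g :: "real \<Rightarrow> real"
  assumes c: "continuous_on {0..1} g" and z: "\<And>x. 0 < x \<Longrightarrow> x < 1 \<Longrightarrow> g x = 0"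
    and x: "x \<in> {0..1}"
  shows "g x = 0"
proof -
  have cl: "closed {x \<in> {0..1}. g x = 0}"
    by (rule continuous_closed_preimage_constant[OF c]) simp
  have "{0<..<1::real} \<subseteq> {x \<in> {0..1}. g x = 0}" using z by auto
  from closure_minimal[OF this cl] have "{0..1} \<subseteq> {x \<in> {0..1}. g x = 0}" by simp
  then show ?thesis using x by blast
qed

lemma cont_from_deriv:
  fixes f f' :: "real \<Rightarrow> real"
  assumes "\<And>x. x \<in> S \<Longrightarrow> (f has_real_derivative f' x) (at x within S)"
  shows "continuous_on S f"
  using assms DERIV_continuous continuous_on_eq_continuous_within by blast

lemma sq_nonneg_aux:
  fixes beta n h :: real
  assumes "beta > 0" "n > 0"
  shows "beta * h / n * h \<ge> 0"
proof -
  have e: "beta * h / n * h = (beta / n) * (h * h)" by simp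
  have "h * h \<ge> 0" by simp
  moreover have "beta / n \<ge> 0" using assms by simp
  ultimately have "(beta / n) * (h * h) \<ge> 0" by (metis mult_nonneg_nonneg)
  then show ?thesis using e by simp
qed

lemma energy:
  fixes E H nu :: "real \<Rightarrow> real" and beta :: real
  assumes beta: "beta > 0" and nu: "\<And>x. x \<in> {0..1} \<Longrightarrow> nu x > 0"
    and dE: "\<And>x. x \<in> {0..1} \<Longrightarrow> (E has_real_derivative beta * H x / nu x) (at x within {0..1})"
    and dH: "\<And>x. x \<in> {0..1} \<Longrightarrow> (H has_real_derivative E x) (at x within {0..1})"
    and E0: "E 0 = 0" and H1: "H 1 = 0"
    and x: "x \<in> {0..1}"
  shows "E x = 0 \<and> H x = 0"
proof -
  define f where "f y = E y * H y" for y
  define f' where "f' y = beta * H y / nu y * H y + E y * E y" for y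
  have df: "(f has_real_derivative f' y) (at y within {0..1})" if "y \<in> {0..1}" for y
    unfolding f_def[abs_def] f'_def using DERIV_mult[OF dE[OF that] dH[OF that]] by simp
  have f'nn: "f' y \<ge> 0" if "y \<in> {0..1}" for y
    using sq_nonneg_aux[OF beta nu[OF that], of "H y"] unfolding f'_def by simp
  have cf: "continuous_on {0..1} f" by (rule cont_from_deriv[OF df])
  have dfat: "(f has_real_derivative f' y) (at y)" if "0 < y" "y < 1" for y
    using df[of y] that by (simp add: at_within_Icc_at)
  have f0: "f 0 = 0" by (simp add: f_def E0)
  have f1: "f 1 = 0" by (simp add: f_def H1)
  have fz: "f y = 0" if y: "y \<in> {0..1}" for y
  proof -
    have "f 0 \<le> f y"
    proof (rule DERIV_nonneg_imp_increasing_open[of 0 y f])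
      show "0 \<le> y" using y by simp
      show "\<exists>D. (f has_real_derivative D) (at t) \<and> 0 \<le> D" if "0 < t" "t < y" for t
        using dfat[of t] f'nn[of t] that y by auto
      show "continuous_on {0..y} f" by (rule continuous_on_subset[OF cf]) (use y in auto)
    qed
    moreover have "f y \<le> f 1"
    proof (rule DERIV_nonneg_imp_increasing_open[of y 1 f])
      show "y \<le> 1" using y by simp
      show "\<exists>D. (f has_real_derivative D) (at t) \<and> 0 \<le> D" if "y < t" "t < 1" for t
        using dfat[of t] f'nn[of t] that y by auto
      show "continuous_on {y..1} f" by (rule continuous_on_subset[OF cf]) (use y in auto)
    qed
    ultimately show ?thesis using f0 f1 by simp
  qed
  have int: "E y = 0 \<and> H y = 0" if y: "0 < y" "y < 1" for y
  proof -
    have "f' y = 0"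
    proof (rule DERIV_local_const[OF dfat[OF y]])
      show "0 < min y (1 - y)" using y by simp
      show "\<forall>t. \<bar>y - t\<bar> < min y (1 - y) \<longrightarrow> f y = f t"
      proof (intro allI impI)
        fix t assume "\<bar>y - t\<bar> < min y (1 - y)"
        then have "t \<in> {0..1}" by auto
        then show "f y = f t" using fz[of t] fz[of y] y by simp
      qed
    qed
    moreover have "beta * H y / nu y * H y \<ge> 0" "E y * E y \<ge> 0"
      using sq_nonneg_aux[OF beta nu[of y], of "H y"] y by auto
    ultimately have a: "beta * H y / nu y * H y = 0" "E y * E y = 0" unfolding f'_def by linarith+
    from a(1) have "H y * H y = 0" using nu[of y] beta y by (auto simp: field_simps)
    then show ?thesis using a(2) by simp
  qed
  have cE: "continuous_on {0..1} E" by (rule cont_from_deriv[OF dE])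
  have cH: "continuous_on {0..1} H" by (rule cont_from_deriv[OF dH])
  show ?thesis
    using endpoints_zero[OF cE _ x] endpoints_zero[OF cH _ x] int by blast
qed



lemma lin_aux:
  fixes c d n P1 P2 U1 U2 W1 W2 s1 s2 :: real
  shows "d * (- c * P1 + s1 * U1 + s2 * W1) + (- c * P2 + s1 * U2 + s2 * W2) * n
    = - (c * (d * P1 + n * P2) - s1 * (d * U1 + n * U2) - s2 * (d * W1 + n * W2))"
  by (simp add: algebra_simps)

theorem mainTheorem3:
  fixes L K Lpa t0 numin numax sigma1 sigma2 p0 w0 wD ql :: real
    and p p' p'' u u' u'' w w' w'' :: "real \<Rightarrow> real"
  assumes "L > 0" "K > 0" "Lpa > 0" "t0 > 0" "0 < numin" "numin < numax"
    and dp: "\<forall>x\<in>{0..1}. (p has_real_derivative p' x) (at x within {0..1})"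
    and dp': "\<forall>x\<in>{0..1}. (p' has_real_derivative p'' x) (at x within {0..1})"
    and cp'': "continuous_on {0..1} p''"
    and du: "\<forall>x\<in>{0..1}. (u has_real_derivative u' x) (at x within {0..1})"
    and du': "\<forall>x\<in>{0..1}. (u' has_real_derivative u'' x) (at x within {0..1})"
    and cu'': "continuous_on {0..1} u''"
    and dw: "\<forall>x\<in>{0..1}. (w has_real_derivative w' x) (at x within {0..1})"
    and dw': "\<forall>x\<in>{0..1}. (w' has_real_derivative w'' x) (at x within {0..1})"
    and cw'': "continuous_on {0..1} w''"
    and ode: "\<forall>x\<in>{0..1}.
        let beta = Lpa * L^2 / K;
            nu = (\<lambda>y. numax - (numax - numin) * y);
            dnu = - (numax - numin);
            qU = beta * ((1 / t0) * (p0 - p x) + sigma1 * u x + sigma2 * (w x - w0))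
        in (1 / t0) * (dnu * p' x + nu x * p'' x)
           - sigma1 * (dnu * u' x + nu x * u'' x)
           - sigma2 * (dnu * w' x + nu x * w'' x) + qU - ql = 0"
    and bc: "p 0 = 1" "u 0 = 1" "w 0 = wD" "p' 1 = 0" "u' 1 = 0" "w' 1 = 0"
  shows "\<forall>x\<in>{0..1}.
    let beta = Lpa * L^2 / K;
        nu = (\<lambda>y. numax - (numax - numin) * y);
        qU = (\<lambda>y. beta * ((1 / t0) * (p0 - p y) + sigma1 * u y + sigma2 * (w y - w0)));
        jU = (\<lambda>y. L * nu y * (- (1 / t0) * p' y + sigma1 * u' y + sigma2 * w' y));
        nus = numax / (numax - numin);
        deltas = Lpa * L^2 / (K * (numax - numin));
        z = (\<lambda>y. 2 * sqrt (deltas * (nus - y)));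
        z0 = z 0; z1 = z 1;
        q0 = beta * ((1 / t0) * (p0 - 1) + sigma1 + sigma2 * (wD - w0));
        D = besselI 0 z0 * besselK 1 z1 + besselK 0 z0 * besselI 1 z1;
        C1 = (q0 - ql) * besselK 1 z1 / D;
        C2 = (q0 - ql) * besselI 1 z1 / D
    in qU x = C1 * besselI 0 (z x) + C2 * besselK 0 (z x) + ql
     \<and> jU x = - L * sqrt ((nus - x) / deltas) * (C1 * besselI 1 (z x) - C2 * besselK 1 (z x))"
proof -
  define a where "a = numax - numin"
  define beta where "beta = Lpa * L^2 / K"
  define nus where "nus = numax / (numax - numin)"
  define deltas where "deltas = Lpa * L^2 / (K * (numax - numin))"
  define zf where "zf y = 2 * sqrt (deltas * (nus - y))" for y
  define q0 where "q0 = beta * ((1 / t0) * (p0 - 1) + sigma1 + sigma2 * (wD - w0))"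
  define D where "D = besselI 0 (zf 0) * besselK 1 (zf 1) + besselK 0 (zf 0) * besselI 1 (zf 1)"
  define C1 where "C1 = (q0 - ql) * besselK 1 (zf 1) / D"
  define C2 where "C2 = (q0 - ql) * besselI 1 (zf 1) / D"
  define nu where "nu y = numax - (numax - numin) * y" for y
  define phi' where "phi' y = - (1 / t0) * p' y + sigma1 * u' y + sigma2 * w' y" for y
  define phi'' where "phi'' y = - (1 / t0) * p'' y + sigma1 * u'' y + sigma2 * w'' y" for y
  define Q where "Q y = beta * ((1 / t0) * (p0 - p y) + sigma1 * u y + sigma2 * (w y - w0)) - ql" for y
  define G where "G y = nu y * phi' y" for y
  define Pz where "Pz y = C1 * besselI 0 y + C2 * besselK 0 y" for y
  define W where "W y = C1 * besselI 1 y - C2 * besselK 1 y" for y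
  define rr where "rr y = sqrt (deltas * (nus - y))" for y
  define GR where "GR y = - (1 / (2 * deltas)) * (zf y * W (zf y))" for y
  define E where "E y = Q y - Pz (zf y)" for y
  define H where "H y = G y - GR y" for y
  have a: "a > 0" using assms(6) by (simp add: a_def)
  have beta: "beta > 0" using assms(1-3) by (simp add: beta_def)
  have deltas: "deltas > 0" using assms(1-3,6) by (simp add: deltas_def)
  have bd: "beta = deltas * a" using a by (simp add: beta_def deltas_def a_def)
  have nusa: "numax = a * nus" using a by (simp add: nus_def a_def)
  have s_pos: "nus - y > 0" if "y \<in> {0..1}" for y
  proof -
    have "nus - 1 = numin / a" using a by (simp add: nus_def a_def field_simps)
    then show ?thesis using that assms(5) a by (smt (verit) atLeastAtMost_iff divide_pos_pos)
  qed
  have nu_eq: "nu y = a * (nus - y)" for y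
  proof -
    have "nu y = numax - a * y" by (simp add: nu_def a_def)
    also have "\<dots> = a * nus - a * y" using nusa by simp
    finally show ?thesis by (simp add: algebra_simps)
  qed
  have nu_pos: "nu y > 0" if "y \<in> {0..1}" for y using s_pos[OF that] a by (simp add: nu_eq)
  have rr_pos: "rr y > 0" if "y \<in> {0..1}" for y using s_pos[OF that] deltas by (simp add: rr_def)
  have rr_sq: "rr y * rr y = deltas * (nus - y)" if "y \<in> {0..1}" for y
    using s_pos[OF that] deltas by (simp add: rr_def)
  have zf_rr: "zf y = 2 * rr y" for y by (simp add: zf_def rr_def)
  have zf_pos: "zf y > 0" if "y \<in> {0..1}" for y using rr_pos[OF that] by (simp add: zf_rr)
  have dPz: "(Pz has_real_derivative W y) (at y)" if "y > 0" for y
  proof -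
    have "(Pz has_real_derivative C1 * besselI 1 y + C2 * (- besselK 1 y)) (at y)"
      unfolding Pz_def[abs_def]
      by (intro DERIV_add DERIV_cmult besselI_deriv0 besselK0_deriv that)
    then show ?thesis by (simp add: W_def)
  qed
  have dM: "((\<lambda>y. y * W y) has_real_derivative y * Pz y) (at y)" if "y > 0" for y
  proof -
    have e: "(\<lambda>y. y * W y) = (\<lambda>y. C1 * (y * besselI 1 y) - C2 * (y * besselK 1 y))"
      by (rule ext) (simp add: W_def algebra_simps)
    have "((\<lambda>y. C1 * (y * besselI 1 y) - C2 * (y * besselK 1 y)) has_real_derivative
        C1 * (y * besselI 0 y) - C2 * (- (y * besselK 0 y))) (at y)"
      by (intro DERIV_diff DERIV_cmult besselI_deriv1 besselK1_deriv' that)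
    then show ?thesis unfolding e by (simp add: Pz_def algebra_simps)
  qed
  have dzf: "(zf has_real_derivative - deltas / rr x) (at x)" if x: "x \<in> {0..1}" for x
  proof -
    have pos: "deltas * (nus - x) > 0" using s_pos[OF x] deltas by simp
    have "((\<lambda>y. 2 * sqrt (deltas * (nus - y))) has_real_derivative 2 * (inverse (sqrt (deltas * (nus - x))) / 2 * (deltas * (0 - 1)))) (at x)"
    proof (intro DERIV_cmult)
      have d1: "((\<lambda>y. deltas * (nus - y)) has_real_derivative deltas * (0 - 1)) (at x)"
        by (auto intro!: derivative_eq_intros)
      show "((\<lambda>y. sqrt (deltas * (nus - y))) has_real_derivative inverse (sqrt (deltas * (nus - x))) / 2 * (deltas * (0 - 1))) (at x)"
        by (rule DERIV_chain2[where f=sqrt and g="\<lambda>y. deltas * (nus - y)", OF DERIV_real_sqrt[OF pos] d1])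
    qed
    then show ?thesis unfolding zf_def[abs_def] rr_def by (simp add: field_simps)
  qed
  have dR: "((\<lambda>y. Pz (zf y)) has_real_derivative W (zf x) * (- deltas / rr x)) (at x)" if x: "x \<in> {0..1}" for x
    by (rule DERIV_chain2[where f=Pz and g=zf, OF dPz[OF zf_pos[OF x]] dzf[OF x]])
  have dGR: "(GR has_real_derivative Pz (zf x)) (at x)" if x: "x \<in> {0..1}" for x
  proof -
    have "((\<lambda>y. - (1 / (2 * deltas)) * (zf y * W (zf y))) has_real_derivative
        - (1 / (2 * deltas)) * ((zf x * Pz (zf x)) * (- deltas / rr x))) (at x)"
      by (intro DERIV_cmult DERIV_chain2[where f="\<lambda>y. y * W y" and g=zf, OF dM[OF zf_pos[OF x]] dzf[OF x]])
    moreover have "- (1 / (2 * deltas)) * ((zf x * Pz (zf x)) * (- deltas / rr x)) = Pz (zf x)"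
      using rr_pos[OF x] deltas by (simp add: zf_rr field_simps)
    ultimately show ?thesis unfolding GR_def[abs_def] by simp
  qed
  have dQ: "(Q has_real_derivative beta * phi' x) (at x within {0..1})" if x: "x \<in> {0..1}" for x
  proof -
    have "(Q has_real_derivative beta * (((1 / t0) * (0 - p' x) + sigma1 * u' x) + sigma2 * (w' x - 0)) - 0) (at x within {0..1})"
      unfolding Q_def[abs_def]
      by (intro DERIV_diff DERIV_cmult DERIV_add DERIV_const dp[rule_format, OF x] du[rule_format, OF x] dw[rule_format, OF x])
    then show ?thesis by (simp add: phi'_def algebra_simps)
  qed
  have dG: "(G has_real_derivative Q x) (at x within {0..1})" if x: "x \<in> {0..1}" for x
  proof -
    have dphi: "(phi' has_real_derivative phi'' x) (at x within {0..1})"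
    proof -
      have "(phi' has_real_derivative - (1 / t0) * p'' x + sigma1 * u'' x + sigma2 * w'' x) (at x within {0..1})"
        unfolding phi'_def[abs_def]
        by (intro DERIV_add DERIV_cmult dp'[rule_format, OF x] du'[rule_format, OF x] dw'[rule_format, OF x])
      then show ?thesis by (simp add: phi''_def)
    qed
    have dnu: "(nu has_real_derivative - (numax - numin)) (at x within {0..1})"
      unfolding nu_def[abs_def] by (auto intro!: derivative_eq_intros)
    have dd: "(G has_real_derivative - (numax - numin) * phi' x + phi'' x * nu x) (at x within {0..1})"
      unfolding G_def[abs_def] by (rule DERIV_mult[OF dnu dphi])
    have o: "(1 / t0) * (- (numax - numin) * p' x + nu x * p'' x)
           - sigma1 * (- (numax - numin) * u' x + nu x * u'' x)
           - sigma2 * (- (numax - numin) * w' x + nu x * w'' x) + beta * ((1 / t0) * (p0 - p x) + sigma1 * u x + sigma2 * (w x - w0)) - ql = 0"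
      using ode[rule_format, OF x] unfolding Let_def nu_def[symmetric] beta_def[symmetric] .
    have eqQ: "- (numax - numin) * phi' x + phi'' x * nu x = Q x"
    proof -
      have "- (numax - numin) * phi' x + phi'' x * nu x =
         - ((1 / t0) * (- (numax - numin) * p' x + nu x * p'' x)
           - sigma1 * (- (numax - numin) * u' x + nu x * u'' x)
           - sigma2 * (- (numax - numin) * w' x + nu x * w'' x))"
        unfolding phi'_def phi''_def by (rule lin_aux)
      then show ?thesis using o unfolding Q_def by linarith
    qed
    show ?thesis by (rule DERIV_cong[OF dd eqQ])
  qed
  have dE: "(E has_real_derivative beta * H x / nu x) (at x within {0..1})" if x: "x \<in> {0..1}" for x
  proof -
    have "(E has_real_derivative beta * phi' x - W (zf x) * (- deltas / rr x)) (at x within {0..1})"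
      unfolding E_def[abs_def] by (intro DERIV_diff dQ[OF x] has_field_derivative_at_within[OF dR[OF x]])
    moreover have "beta * phi' x - W (zf x) * (- deltas / rr x) = beta * H x / nu x"
    proof -
      have rs: "rr x * rr x = deltas * (nus - x)" by (rule rr_sq[OF x])
      have "beta * H x / nu x = beta * phi' x - beta * GR x / nu x"
        using nu_pos[OF x] by (simp add: H_def G_def field_simps)
      moreover have "beta * GR x / nu x = - (W (zf x) * deltas / rr x)"
      proof -
        have "beta * GR x / nu x = - (rr x * W (zf x)) / (nus - x)"
          using deltas a s_pos[OF x] by (simp add: bd GR_def zf_rr nu_eq field_simps)
        also have "\<dots> = - ((rr x * rr x) * W (zf x)) / ((nus - x) * rr x)"
          using rr_pos[OF x] by simp
        also have "\<dots> = - (deltas * (nus - x) * W (zf x)) / ((nus - x) * rr x)"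
          by (simp only: rs)
        also have "\<dots> = - (W (zf x) * deltas / rr x)"
          using s_pos[OF x] by simp
        finally show ?thesis .
      qed
      ultimately show ?thesis by simp
    qed
    ultimately show ?thesis by simp
  qed
  have dH: "(H has_real_derivative E x) (at x within {0..1})" if x: "x \<in> {0..1}" for x
  proof -
    have "(H has_real_derivative Q x - Pz (zf x)) (at x within {0..1})"
      unfolding H_def[abs_def] by (intro DERIV_diff dG[OF x] has_field_derivative_at_within[OF dGR[OF x]])
    then show ?thesis by (simp add: E_def)
  qed
  have Dpos: "D > 0"
  proof -
    have z0: "zf 0 > 0" and z1: "zf 1 > 0" using zf_pos by auto
    have "besselI 0 (zf 0) * besselK 1 (zf 1) > 0"
      using besselI_pos[OF z0] besselK_pos(2)[OF z1] by simp
    moreover have "besselK 0 (zf 0) * besselI 1 (zf 1) > 0"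
      using besselK_pos(1)[OF z0] besselI_pos[OF z1] by simp
    ultimately show ?thesis by (simp add: D_def)
  qed
  have E0: "E 0 = 0"
  proof -
    have "Q 0 = q0 - ql" by (simp add: Q_def q0_def bc)
    moreover have "Pz (zf 0) = q0 - ql"
    proof -
      have "Pz (zf 0) = (q0 - ql) * (besselI 0 (zf 0) * besselK 1 (zf 1) + besselK 0 (zf 0) * besselI 1 (zf 1)) / D"
        using Dpos unfolding Pz_def C1_def C2_def by (simp add: field_simps)
      also have "\<dots> = q0 - ql" using Dpos unfolding D_def[symmetric] by simp
      finally show ?thesis .
    qed
    ultimately show ?thesis by (simp add: E_def)
  qed
  have H1: "H 1 = 0"
  proof -
    have "G 1 = 0" by (simp add: G_def phi'_def bc)
    moreover have "W (zf 1) = 0" by (simp add: W_def C1_def C2_def field_simps)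
    ultimately show ?thesis by (simp add: H_def GR_def)
  qed
  have EH: "E x = 0 \<and> H x = 0" if x: "x \<in> {0..1}" for x
    by (rule energy[OF beta nu_pos dE dH E0 H1 x])
  have sq: "sqrt ((nus - x) / deltas) = zf x / (2 * deltas)" if x: "x \<in> {0..1}" for x
  proof -
    have "zf x / (2 * deltas) = sqrt deltas * sqrt (nus - x) / (sqrt deltas * sqrt deltas)"
      using deltas by (simp add: zf_def real_sqrt_mult)
    also have "\<dots> = sqrt (nus - x) / sqrt deltas" using deltas by (simp add: field_simps)
    also have "\<dots> = sqrt ((nus - x) / deltas)" by (simp add: real_sqrt_divide)
    finally show ?thesis by simp
  qed
  have fin: "beta * ((1 / t0) * (p0 - p x) + sigma1 * u x + sigma2 * (w x - w0))
              = C1 * besselI 0 (zf x) + C2 * besselK 0 (zf x) + ql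
           \<and> L * nu x * (- (1 / t0) * p' x + sigma1 * u' x + sigma2 * w' x)
              = - L * sqrt ((nus - x) / deltas) * (C1 * besselI 1 (zf x) - C2 * besselK 1 (zf x))"
    if x: "x \<in> {0..1}" for x
  proof
    show "beta * ((1 / t0) * (p0 - p x) + sigma1 * u x + sigma2 * (w x - w0))
              = C1 * besselI 0 (zf x) + C2 * besselK 0 (zf x) + ql"
      using EH[OF x] by (simp add: E_def Q_def Pz_def algebra_simps)
    have "G x = GR x" using EH[OF x] by (simp add: H_def)
    then show "L * nu x * (- (1 / t0) * p' x + sigma1 * u' x + sigma2 * w' x)
              = - L * sqrt ((nus - x) / deltas) * (C1 * besselI 1 (zf x) - C2 * besselK 1 (zf x))"
    proof -
      assume g: "G x = GR x"
      have "L * nu x * (- (1 / t0) * p' x + sigma1 * u' x + sigma2 * w' x) = L * G x"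
        by (simp add: G_def phi'_def)
      also have "\<dots> = L * GR x" using g by simp
      also have "\<dots> = - L * (zf x / (2 * deltas)) * W (zf x)"
        using deltas by (simp add: GR_def)
      finally show ?thesis unfolding sq[OF x] W_def .
    qed
  qed
  show ?thesis
    unfolding Let_def
    using fin
    unfolding beta_def[symmetric] nus_def[symmetric] deltas_def[symmetric] zf_def[symmetric] q0_def[symmetric]
      D_def[symmetric] C1_def[symmetric] C2_def[symmetric] nu_def
    by blast
qed

end
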